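(* Let $\psi,\phi\in \mathbf{\Psi}_n$, and set $m:=\min_{t\in\Omega_n}\frac{\psi(t)}{\phi(t)}$, $M:=\max_{t\in\Omega_n}\frac{\psi(t)}{\phi(t)}$, $m^*:=\min_{s\in\Omega_n}\frac{\psi^*(s)}{\phi^*(s)}$, $M^*:=\max_{s\in\Omega_n}\frac{\psi^*(s)}{\phi^*(s)}$. Then: (i) $\frac{1}{n}\le m\le \frac{\psi(t)}{\phi(t)} \le M\le n$ for all $t\in\Omega_n$; (ii) $\frac{1}{n}\le m^*\le \frac{\psi^*(t)}{\phi^*(t)}\le M^*\le n$ for all $t\in\Omega_n$; (iii) $m\cdot M^*= M\cdot m^*=1$; (iv) $m\cdot|\!|\!|\cdot|\!|\!|_{\phi}\le|\!|\!|\cdot|\!|\!|_{\psi}\le M\cdot|\!|\!|\cdot|\!|\!|_{\phi}$; (v) $\frac{1}{M}\cdot|\!|\!|\cdot|\!|\!|_{\phi^*}\le|\!|\!|\cdot|\!|\!|_{\psi^*}\le\frac{1}{m}\cdot|\!|\!|\cdot|\!|\!|_{\phi^*}$; (vi) $\psi\ge\phi$ if and only if $\psi^*\le\phi^*$; (vii) $\psi\le\phi$ if and only if $\psi^*\ge\phi^*$.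
   Context: Let $(X,\|\cdot\|)$ be a normed vector space, $n\ge2$. $\Omega_n:=\{t\in\mathbb{R}^n\mid t_i\ge0,\ \sum_i t_i=1\}$, $\Omega_n^\circ:=\{t\in\Omega_n\mid t_i<1\ \forall i\}$. $\mathbf{\Psi}_n$ is the class of convex continuous $\psi:\Omega_n\to\mathbb{R}$ with (B1) $\psi(\mathbf{e}_i)=1$ for all standard unit vectors $\mathbf{e}_i$ and (B2) $\psi(t)\ge(1-t_i)\psi\big(\frac{t_1}{1-t_i},\ldots,\frac{t_{i-1}}{1-t_i},0,\frac{t_{i+1}}{1-t_i},\ldots,\frac{t_n}{1-t_i}\big)$ for all $t\in\Omega_n^\circ$, $i=1,\ldots,n$. For $\psi\in\mathbf{\Psi}_n$, the dual function is $\psi^*(s):=\max_{t\in\Omega_n}\frac{\langle t,s\rangle}{\psi(t)}$, $s\in\Omega_n$. The norm $|\!|\!|\cdot|\!|\!|_\psi$ on $X^n$ is $|\!|\!|x|\!|\!|_\psi:=\big(\sum_{i}\|x_i\|\big)\,\psi\big(\frac{\|x_1\|}{\sum_{i}\|x_i\|},\ldots,\frac{\|x_n\|}{\sum_{i}\|x_i\|}\big)$ for $x\ne0$, $|\!|\!|0|\!|\!|_\psi:=0$; $|\!|\!|\cdot|\!|\!|_{\psi^*}$ denotes its dual norm on $(X^n)^*\cong(X^* )^n$, which equals the analogous construction with $\psi^*$ and the dual norm on $X^*$. Inequalities $\psi\ge\phi$ etc. are pointwise on $\Omega_n$. *)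

theory Defs
  imports "HOL-Analysis.Analysis"
begin

text \<open>Index set {1..n} is a finite type 'n, with n = CARD('n).\<close>

definition Omega :: "(real^'n) set" where
  "Omega = {t. (\<forall>i. 0 \<le> t$i) \<and> (\<Sum>i\<in>UNIV. t$i) = 1}"

definition Omega_int :: "(real^'n) set" where
  "Omega_int = {t \<in> Omega. \<forall>i. t$i < 1}"

definition PsiClass :: "((real^'n) \<Rightarrow> real) set" where
  "PsiClass = {psi. convex_on Omega psi \<and> continuous_on Omega psi
      \<and> (\<forall>i. psi (axis i 1) = 1)
      \<and> (\<forall>t\<in>Omega_int. \<forall>i.
            psi t \<ge> (1 - t$i) * psi (\<chi> j. if j = i then 0 else t$j / (1 - t$i)))}"

definition dual_fun :: "((real^'n) \<Rightarrow> real) \<Rightarrow> (real^'n) \<Rightarrow> real" where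
  "dual_fun psi s = (SUP t\<in>Omega. (t \<bullet> s) / psi t)"

definition psi_norm :: "((real^'n) \<Rightarrow> real) \<Rightarrow> ('n \<Rightarrow> 'a::real_normed_vector) \<Rightarrow> real" where
  "psi_norm psi x = (let S = (\<Sum>i\<in>UNIV. norm (x i)) in
      if S = 0 then 0 else S * psi (\<chi> i. norm (x i) / S))"

text \<open>Dual norm of psi_norm on (X^n)^* = (X^*)^n: a tuple f of bounded linear
  functionals acts by x \<mapsto> \<Sum>i f i (x i).\<close>
definition psi_dual_norm :: "((real^'n) \<Rightarrow> real) \<Rightarrow> ('n \<Rightarrow> 'a::real_normed_vector \<Rightarrow> real) \<Rightarrow> real" where
  "psi_dual_norm psi f = (SUP x\<in>{x. psi_norm psi x \<le> 1}. \<bar>\<Sum>i\<in>UNIV. f i (x i)\<bar>)"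

end

theory Submission
  imports Defs
begin


definition NN :: "((real^'n) \<Rightarrow> real) \<Rightarrow> real^'n \<Rightarrow> real" where
  "NN psi y = (let S = (\<Sum>i\<in>UNIV. y$i) in if S = 0 then 0 else S * psi (\<chi> i. y$i / S))"

definition nonneg :: "real^'n \<Rightarrow> bool" where
  "nonneg y \<longleftrightarrow> (\<forall>i. 0 \<le> y$i)"

lemma Omega_iff: "t \<in> Omega \<longleftrightarrow> nonneg t \<and> (\<Sum>i\<in>UNIV. t$i) = 1"
  by (simp add: Omega_def nonneg_def)

lemma axis_Omega: "axis i 1 \<in> Omega"
proof -
  have "(\<Sum>j\<in>UNIV. axis i (1::real) $ j) = 1"
    by (simp add: axis_def sum.delta)
  then show ?thesis by (simp add: Omega_def axis_def)
qed

lemma Omega_ne: "Omega \<noteq> {}" using axis_Omega by blast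

lemma NN_Omega: "t \<in> Omega \<Longrightarrow> NN psi t = psi t"
  by (simp add: NN_def Omega_def)

lemma psi_norm_NN: "psi_norm psi x = NN psi (\<chi> i. norm (x i))"
  by (simp add: psi_norm_def NN_def Let_def)

lemma NN_zero: "NN psi 0 = 0" by (simp add: NN_def)

lemma nonneg_sum_zero: "nonneg y \<Longrightarrow> (\<Sum>i\<in>UNIV. y$i) = 0 \<Longrightarrow> y = 0"
  unfolding nonneg_def
  by (simp add: sum_nonneg_eq_0_iff vec_eq_iff)

lemma nonneg_normalize:
  assumes "nonneg y" "(\<Sum>i\<in>UNIV. y$i) \<noteq> 0"
  shows "(\<Sum>i\<in>UNIV. y$i) > 0" "(\<chi> i. y$i / (\<Sum>i\<in>UNIV. y$i)) \<in> Omega"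
proof -
  have "(\<Sum>i\<in>UNIV. y$i) \<ge> 0" using assms(1) by (simp add: nonneg_def sum_nonneg)
  then show gt: "(\<Sum>i\<in>UNIV. y$i) > 0" using assms(2) by linarith
  have "(\<Sum>j\<in>UNIV. y$j / (\<Sum>i\<in>UNIV. y$i)) = 1"
    using gt by (simp add: sum_divide_distrib[symmetric])
  then show "(\<chi> i. y$i / (\<Sum>i\<in>UNIV. y$i)) \<in> Omega"
    using assms(1) gt by (simp add: Omega_def nonneg_def)
qed

lemma NN_scale:
  assumes "c \<ge> 0" shows "NN psi (c *\<^sub>R y) = c * NN psi y"
proof (cases "c = 0")
  case True then show ?thesis by (simp add: NN_def)
next
  case False
  have s: "(\<Sum>i\<in>UNIV. (c *\<^sub>R y)$i) = c * (\<Sum>i\<in>UNIV. y$i)"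
    by (simp add: sum_distrib_left)
  have v: "(\<chi> i. (c *\<^sub>R y)$i / (c * (\<Sum>i\<in>UNIV. y$i))) = (\<chi> i. y$i / (\<Sum>i\<in>UNIV. y$i))"
    using False by (simp add: vec_eq_iff)
  show ?thesis unfolding NN_def Let_def s v using False by simp
qed

lemma nonneg_add: "nonneg x \<Longrightarrow> nonneg y \<Longrightarrow> nonneg (x + y)"
  by (simp add: nonneg_def)
lemma nonneg_scale: "c \<ge> 0 \<Longrightarrow> nonneg x \<Longrightarrow> nonneg (c *\<^sub>R x)"
  by (simp add: nonneg_def)

lemma PsiD:
  assumes "psi \<in> PsiClass"
  shows "convex_on Omega psi" "continuous_on Omega psi" "\<And>i. psi (axis i 1) = 1"
    "\<And>t i. t \<in> Omega_int \<Longrightarrow> psi t \<ge> (1 - t$i) * psi (\<chi> j. if j = i then 0 else t$j / (1 - t$i))"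
  using assms by (auto simp: PsiClass_def)

lemma NN_subadd:
  assumes psi: "psi \<in> PsiClass" and x: "nonneg x" and y: "nonneg y"
  shows "NN psi (x + y) \<le> NN psi x + NN psi y"
proof -
  define S where "S = (\<Sum>i\<in>UNIV. x$i)"
  define T where "T = (\<Sum>i\<in>UNIV. y$i)"
  show ?thesis
  proof (cases "S = 0")
    case True
    then have "x = 0" using nonneg_sum_zero[OF x] S_def by simp
    then show ?thesis by (simp add: NN_zero)
  next
    case S0: False
    show ?thesis
    proof (cases "T = 0")
      case True
      then have "y = 0" using nonneg_sum_zero[OF y] T_def by simp
      then show ?thesis by (simp add: NN_zero)
    next
      case T0: False
      have Sp: "S > 0" and xo: "(\<chi> i. x$i / S) \<in> Omega"
        using nonneg_normalize[OF x] S0 S_def by auto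
      have Tp: "T > 0" and yo: "(\<chi> i. y$i / T) \<in> Omega"
        using nonneg_normalize[OF y] T0 T_def by auto
      have ST: "(\<Sum>i\<in>UNIV. (x+y)$i) = S + T"
        by (simp add: S_def T_def sum.distrib)
      have eq: "(\<chi> i. (x+y)$i / (S+T)) = (S/(S+T)) *\<^sub>R (\<chi> i. x$i / S) + (T/(S+T)) *\<^sub>R (\<chi> i. y$i / T)"
      proof -
        have "\<And>a b. (a+b) / (S+T) = S/(S+T) * (a/S) + T/(S+T) * (b/T)"
          using Sp Tp by (simp add: add_divide_distrib)
        then show ?thesis by (simp add: vec_eq_iff)
      qed
      have "psi (\<chi> i. (x+y)$i / (S+T)) \<le> (S/(S+T)) * psi (\<chi> i. x$i / S) + (T/(S+T)) * psi (\<chi> i. y$i / T)"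
      proof -
        have "S/(S+T) = 1 - T/(S+T)" using Sp Tp by (simp add: field_simps)
        moreover have "T/(S+T) \<le> 1" using Sp Tp by simp
        ultimately show ?thesis unfolding eq
          using convex_onD[OF PsiD(1)[OF psi], of "T/(S+T)", OF _ _ xo yo] Sp Tp by simp
      qed
      then have "(S+T) * psi (\<chi> i. (x+y)$i / (S+T)) \<le> (S+T) * ((S/(S+T)) * psi (\<chi> i. x$i / S) + (T/(S+T)) * psi (\<chi> i. y$i / T))"
        using Sp Tp by (intro mult_left_mono) auto
      also have "\<dots> = S * psi (\<chi> i. x$i / S) + T * psi (\<chi> i. y$i / T)"
        using Sp Tp by (simp add: distrib_left)
      finally show ?thesis unfolding NN_def Let_def ST S_def[symmetric] T_def[symmetric]
        using Sp Tp S0 T0 by simp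
    qed
  qed
qed

lemma NN_convex:
  assumes psi: "psi \<in> PsiClass" and x: "nonneg x" and y: "nonneg y" and u: "0 \<le> u" "u \<le> 1"
  shows "NN psi (u *\<^sub>R x + (1-u) *\<^sub>R y) \<le> u * NN psi x + (1-u) * NN psi y"
proof -
  have "NN psi (u *\<^sub>R x + (1-u) *\<^sub>R y) \<le> NN psi (u *\<^sub>R x) + NN psi ((1-u) *\<^sub>R y)"
    using u by (intro NN_subadd[OF psi] nonneg_scale x y) auto
  also have "\<dots> = u * NN psi x + (1-u) * NN psi y"
    using u by (simp add: NN_scale)
  finally show ?thesis .
qed

definition zero_at :: "'n \<Rightarrow> real^'n \<Rightarrow> real^'n" where
  "zero_at i y = (\<chi> j. if j = i then 0 else y$j)"

definition upd :: "'n \<Rightarrow> real \<Rightarrow> real^'n \<Rightarrow> real^'n" where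
  "upd i c y = (\<chi> j. if j = i then c else y$j)"

lemma sum_zero_at: "(\<Sum>j\<in>UNIV. zero_at i y $ j) = (\<Sum>j\<in>UNIV. y$j) - y$i"
proof -
  have "(\<Sum>j\<in>UNIV. zero_at i y $ j) = (\<Sum>j\<in>UNIV. y$j - (if j = i then y$j else 0))"
    by (intro sum.cong) (auto simp: zero_at_def)
  also have "\<dots> = (\<Sum>j\<in>UNIV. y$j) - y$i"
    by (simp add: sum_subtractf)
  finally show ?thesis .
qed

lemma Omega_one:
  assumes t: "t \<in> Omega" and tj: "t$j \<ge> 1"
  shows "t = axis j 1"
proof -
  have nn: "\<And>k. 0 \<le> t$k" using t by (simp add: Omega_def)
  have s1: "(\<Sum>k\<in>UNIV. t$k) = 1" using t by (simp add: Omega_def)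
  have "t$k = 0" if "k \<noteq> j" for k
  proof -
    have "(\<Sum>k\<in>{j,k}. t$k) \<le> (\<Sum>k\<in>UNIV. t$k)"
      by (intro sum_mono2) (auto simp: nn)
    then have "t$j + t$k \<le> 1" using that s1 by simp
    then show ?thesis using nn[of k] tj by linarith
  qed
  moreover have "t$j = 1"
  proof -
    have "(\<Sum>k\<in>{j}. t$k) \<le> (\<Sum>k\<in>UNIV. t$k)"
      by (intro sum_mono2) (auto simp: nn)
    then show ?thesis using s1 tj by simp
  qed
  ultimately show ?thesis by (auto simp: vec_eq_iff axis_def)
qed

lemma NN_B2:
  assumes psi: "psi \<in> PsiClass" and y: "nonneg y"
  shows "NN psi (zero_at i y) \<le> NN psi y"
proof -
  define S where "S = (\<Sum>i\<in>UNIV. y$i)"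
  show ?thesis
  proof (cases "S = 0")
    case True
    then have "y = 0" using nonneg_sum_zero[OF y] S_def by simp
    then have "zero_at i y = 0" by (simp add: zero_at_def vec_eq_iff)
    then show ?thesis using \<open>y = 0\<close> by simp
  next
    case S0: False
    define t where "t = (\<chi> i. y$i / S)"
    have Sp: "S > 0" and to: "t \<in> Omega"
      using nonneg_normalize[OF y] S0 S_def t_def by auto
    have NNy: "NN psi y = S * psi t" using S0 by (simp add: NN_def S_def[symmetric] t_def)
    have yt: "\<And>j. y$j = S * t$j" using Sp by (simp add: t_def)
    show ?thesis
    proof (cases "t \<in> Omega_int")
      case True
      have ti: "t$i < 1" using True by (simp add: Omega_int_def)
      have st1: "(\<Sum>j\<in>UNIV. t$j) = 1" using to by (simp add: Omega_def)
      have s2: "(\<Sum>j\<in>UNIV. zero_at i y $ j) = S * (1 - t$i)"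
        by (simp add: sum_zero_at S_def[symmetric] yt algebra_simps sum_distrib_left[symmetric] st1)
      have ne: "S * (1 - t$i) \<noteq> 0" using Sp ti by simp
      have v: "(\<chi> j. zero_at i y $ j / (S * (1 - t$i))) = (\<chi> j. if j = i then 0 else t$j / (1 - t$i))"
        using Sp ti by (simp add: vec_eq_iff zero_at_def yt)
      have "NN psi (zero_at i y) = S * ((1 - t$i) * psi (\<chi> j. if j = i then 0 else t$j / (1 - t$i)))"
        unfolding NN_def Let_def s2 v using ne by simp
      also have "\<dots> \<le> S * psi t"
        using PsiD(4)[OF psi True, of i] Sp by (intro mult_left_mono) auto
      finally show ?thesis using NNy by simp
    next
      case False
      then obtain j where tj: "t$j \<ge> 1" using to by (auto simp: Omega_int_def not_less)
      have tax: "t = axis j 1" using Omega_one[OF to tj] .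
      show ?thesis
      proof (cases "j = i")
        case True
        have "zero_at i y = 0" using tax True by (auto simp: vec_eq_iff zero_at_def yt axis_def)
        moreover have "NN psi y = S" using NNy tax PsiD(3)[OF psi] by simp
        ultimately show ?thesis using Sp by (simp add: NN_zero)
      next
        case False
        have "zero_at i y = y" using tax False by (auto simp: vec_eq_iff zero_at_def yt axis_def)
        then show ?thesis by simp
      qed
    qed
  qed
qed

lemma NN_mono1:
  assumes psi: "psi \<in> PsiClass" and y: "nonneg y" and c: "0 \<le> c" "c \<le> y$i"
  shows "NN psi (upd i c y) \<le> NN psi y"
proof (cases "y$i = 0")
  case True
  then have "upd i c y = y" using c by (auto simp: vec_eq_iff upd_def)
  then show ?thesis by simp
next
  case False
  then have yp: "y$i > 0" using y by (simp add: nonneg_def less_le)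
  define u where "u = c / y$i"
  have u: "0 \<le> u" "u \<le> 1" using c yp by (auto simp: u_def)
  have z: "nonneg (zero_at i y)" using y by (simp add: nonneg_def zero_at_def)
  have eq: "upd i c y = u *\<^sub>R y + (1-u) *\<^sub>R zero_at i y"
    using yp by (auto simp: vec_eq_iff upd_def zero_at_def u_def) (simp_all add: field_simps)
  have "NN psi (upd i c y) \<le> u * NN psi y + (1-u) * NN psi (zero_at i y)"
    unfolding eq by (rule NN_convex[OF psi y z u])
  also have "\<dots> \<le> u * NN psi y + (1-u) * NN psi y"
    using NN_B2[OF psi y, of i] u by (intro add_left_mono mult_left_mono) auto
  finally show ?thesis by (simp add: algebra_simps)
qed

lemma NN_mono_aux:
  fixes F :: "'n::finite set"
  assumes psi: "psi \<in> PsiClass" and F: "finite F"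
  shows "\<forall>(x::real^'n) y. nonneg x \<and> (\<forall>j. x$j \<le> y$j) \<and> (\<forall>j. j \<notin> F \<longrightarrow> x$j = y$j) \<longrightarrow> NN psi x \<le> NN psi y"
  using F
proof (induction F rule: finite_induct)
  case empty
  show ?case
  proof (intro allI impI)
    fix x y :: "real^'n"
    assume "nonneg x \<and> (\<forall>j. x$j \<le> y$j) \<and> (\<forall>j. j \<notin> {} \<longrightarrow> x$j = y$j)"
    then have "x = y" by (simp add: vec_eq_iff)
    then show "NN psi x \<le> NN psi y" by simp
  qed
next
  case (insert i F)
  show ?case
  proof (intro allI impI)
    fix x y :: "real^'n"
    assume a: "nonneg x \<and> (\<forall>j. x$j \<le> y$j) \<and> (\<forall>j. j \<notin> insert i F \<longrightarrow> x$j = y$j)"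
    define z where "z = upd i (x$i) y"
    have z1: "\<forall>j. x$j \<le> z$j" using a by (simp add: z_def upd_def)
    have z2: "\<forall>j. j \<notin> F \<longrightarrow> x$j = z$j" using a by (simp add: z_def upd_def)
    have xn: "nonneg x" using a by blast
    have "NN psi x \<le> NN psi z"
      using insert.IH xn z1 z2 by blast
    also have "NN psi z \<le> NN psi y"
      unfolding z_def
    proof (rule NN_mono1[OF psi])
      show "nonneg y" using a unfolding nonneg_def by (meson order_trans)
      show "0 \<le> x$i" using xn by (simp add: nonneg_def)
      show "x$i \<le> y$i" using a by blast
    qed
    finally show "NN psi x \<le> NN psi y" .
  qed
qed

lemma NN_mono:
  assumes psi: "psi \<in> PsiClass" and x: "nonneg x" and xy: "\<And>j. x$j \<le> y$j"
  shows "NN psi x \<le> NN psi y"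
  using NN_mono_aux[OF psi, of UNIV] x xy by auto

lemma NN_axis: assumes psi: "psi \<in> PsiClass" and c: "c \<ge> 0" shows "NN psi (c *\<^sub>R axis i 1) = c"
  by (simp add: NN_scale[OF c] NN_Omega[OF axis_Omega] PsiD(3)[OF psi])

lemma NN_ge_comp:
  assumes psi: "psi \<in> PsiClass" and y: "nonneg y"
  shows "y$i \<le> NN psi y"
proof -
  have "NN psi (y$i *\<^sub>R axis i 1) \<le> NN psi y"
    using y by (intro NN_mono[OF psi]) (auto simp: nonneg_def axis_def)
  then show ?thesis using NN_axis[OF psi] y by (simp add: nonneg_def)
qed

lemma NN_nonneg: assumes psi: "psi \<in> PsiClass" and y: "nonneg y" shows "0 \<le> NN psi y"
  using NN_ge_comp[OF psi y] y unfolding nonneg_def by (meson order_trans)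

lemma psi_upper: assumes psi: "psi \<in> PsiClass" and t: "t \<in> Omega" shows "psi t \<le> 1"
proof -
  have "psi (\<Sum>i\<in>UNIV. t$i *\<^sub>R axis i 1) \<le> (\<Sum>i\<in>UNIV. t$i * psi (axis i 1))"
    using t axis_Omega by (intro convex_on_sum[OF _ _ PsiD(1)[OF psi]]) (auto simp: Omega_def)
  moreover have "(\<Sum>i\<in>UNIV. t$i *\<^sub>R axis i 1) = t"
    using basis_expansion[of t] by (simp add: scalar_mult_eq_scaleR)
  ultimately show ?thesis using t by (simp add: PsiD(3)[OF psi] Omega_def)
qed

lemma psi_lower: assumes psi: "psi \<in> PsiClass" and t: "t \<in> Omega" shows "t$i \<le> psi t"
  using NN_ge_comp[OF psi, of t i] NN_Omega[OF t] t by (simp add: Omega_iff)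

lemma Omega_big: fixes t :: "real^'n" assumes t: "t \<in> Omega" shows "\<exists>i. 1 / real CARD('n) \<le> t$i"
proof (rule ccontr)
  assume "\<not> ?thesis"
  then have lt: "\<And>i. t$i < 1 / real CARD('n)" by (meson not_le)
  have "(\<Sum>i\<in>UNIV. t$i) < (\<Sum>i\<in>(UNIV::'n set). 1 / real CARD('n))"
  proof -
    have "\<forall>x\<in>UNIV. t $ x \<le> 1 / real CARD('n)" using lt less_imp_le by blast
    moreover have "\<exists>a\<in>UNIV. t $ a < 1 / real CARD('n)" using lt[of undefined] by blast
    ultimately show ?thesis
      using sum_strict_mono_ex1[of "UNIV::'n set" "\<lambda>i. t$i" "\<lambda>i. 1 / real CARD('n)"] by simp
  qed
  then show False using t by (simp add: Omega_def)
qed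

lemma psi_ge_n: fixes t :: "real^'n" assumes psi: "psi \<in> PsiClass" and t: "t \<in> Omega" shows "1 / real CARD('n) \<le> psi t"
  using Omega_big[OF t] psi_lower[OF psi t] by (meson order_trans)

lemma psi_pos: fixes t :: "real^'n" assumes psi: "psi \<in> PsiClass" and t: "t \<in> Omega" shows "0 < psi t"
proof -
  have "0 < 1 / real CARD('n)" by simp
  then show ?thesis using psi_ge_n[OF psi t] by linarith
qed



lemma inner_cart: "(x::real^'n) \<bullet> y = (\<Sum>i\<in>UNIV. x$i * y$i)"
  by (simp add: inner_vec_def)

lemma Omega_compact: "compact (Omega :: (real^'n) set)"
unfolding compact_eq_bounded_closed proof (intro conjI)
  show "bounded (Omega :: (real^'n) set)"
    unfolding bounded_iff
  proof (intro exI ballI)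
    fix t :: "real^'n" assume t: "t \<in> Omega"
    have "norm t \<le> (\<Sum>i\<in>UNIV. \<bar>t$i\<bar>)" by (rule norm_le_l1_cart)
    also have "\<dots> = 1" using t by (simp add: Omega_def)
    finally show "norm t \<le> 1" .
  qed
  have eq: "(Omega :: (real^'n) set) = (\<Inter>i. {x::real^'n. x$i \<ge> 0}) \<inter> {x. inner (\<chi> i. 1) x = 1}"
    by (auto simp: Omega_def inner_cart)
  show "closed (Omega :: (real^'n) set)"
  proof -
    have "\<And>i. closed {x::real^'n. 0 \<le> x$i}" by (rule closed_halfspace_component_ge_cart)
    then show ?thesis unfolding eq by (intro closed_Int closed_INT closed_hyperplane) auto
  qed
qed

context
  fixes psi :: "real^'n \<Rightarrow> real" and s :: "real^'n"
  assumes psi: "psi \<in> PsiClass" and s: "s \<in> Omega"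
begin

lemma inner_nonneg_Om: "t \<in> Omega \<Longrightarrow> 0 \<le> t \<bullet> s"
  using s by (auto simp: inner_cart Omega_def intro!: sum_nonneg)

lemma inner_le_psi: assumes t: "t \<in> Omega" shows "t \<bullet> s \<le> psi t"
proof -
  have "t \<bullet> s \<le> (\<Sum>i\<in>UNIV. psi t * s$i)"
    unfolding inner_cart
    using psi_lower[OF psi t] s by (intro sum_mono mult_right_mono) (auto simp: Omega_def)
  also have "\<dots> = psi t" using s by (simp add: sum_distrib_left[symmetric] Omega_def)
  finally show ?thesis .
qed

lemma ratio_le1: "t \<in> Omega \<Longrightarrow> t \<bullet> s / psi t \<le> 1"
  using inner_le_psi psi_pos[OF psi] by (simp add: divide_le_eq_1)

lemma dual_bdd: "bdd_above ((\<lambda>t. t \<bullet> s / psi t) ` Omega)"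
  using ratio_le1 by (auto intro!: bdd_aboveI)

lemma dual_upper: "t \<in> Omega \<Longrightarrow> t \<bullet> s / psi t \<le> dual_fun psi s"
  unfolding dual_fun_def by (rule cSUP_upper[OF _ dual_bdd])

lemma dual_least: "(\<And>t. t \<in> Omega \<Longrightarrow> t \<bullet> s / psi t \<le> c) \<Longrightarrow> dual_fun psi s \<le> c"
  unfolding dual_fun_def by (rule cSUP_least[OF Omega_ne])

lemma dual_le1: "dual_fun psi s \<le> 1"
  by (rule dual_least[OF ratio_le1])

lemma dual_ge_comp: "s$i \<le> dual_fun psi s"
  using dual_upper[OF axis_Omega, of i] by (simp add: PsiD(3)[OF psi] inner_axis')

lemma dual_ge_n: "1 / real CARD('n) \<le> dual_fun psi s"
  using Omega_big[OF s] dual_ge_comp by (meson order_trans)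

lemma dual_pos: "0 < dual_fun psi s"
proof -
  have "0 < 1 / real CARD('n)" by simp
  then show ?thesis using dual_ge_n by linarith
qed

end



lemma key_support:
  fixes phi :: "real^'n \<Rightarrow> real" and t0 :: "real^'n"
  assumes psi: "phi \<in> PsiClass" and t0: "t0 \<in> Omega"
  shows "\<exists>s\<in>Omega. \<forall>t\<in>Omega. t \<bullet> s / phi t \<le> t0 \<bullet> s / phi t0"
proof -
  have p0: "phi t0 > 0" using psi_pos[OF psi t0] .
  define x0 where "x0 = (1 / phi t0) *\<^sub>R t0"
  have NNx0: "NN phi x0 = 1" using p0 by (simp add: x0_def NN_scale NN_Omega[OF t0])
  have nx0: "nonneg x0" using t0 p0 by (auto simp: x0_def Omega_def nonneg_def)
  define S where "S = {y::real^'n. \<exists>x. nonneg x \<and> NN phi x < 1 \<and> (\<forall>i. y$i \<le> x$i)}"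
  have convS: "convex S"
    unfolding convex_alt
  proof (intro ballI allI impI)
    fix y1 y2 :: "real^'n" and u :: real
    assume y1: "y1 \<in> S" and y2: "y2 \<in> S" and u: "0 \<le> u \<and> u \<le> 1"
    obtain x1 where x1: "nonneg x1" "NN phi x1 < 1" "\<forall>i. y1$i \<le> x1$i" using y1 S_def by auto
    obtain x2 where x2: "nonneg x2" "NN phi x2 < 1" "\<forall>i. y2$i \<le> x2$i" using y2 S_def by auto
    have "NN phi (u *\<^sub>R x2 + (1-u) *\<^sub>R x1) \<le> u * NN phi x2 + (1-u) * NN phi x1"
      using NN_convex[OF psi x2(1) x1(1)] u by auto
    also have "\<dots> < 1"
    proof -
      have "u * NN phi x2 \<le> u" using x2(2) u mult_left_mono[of "NN phi x2" 1 u] by auto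
      moreover have "(1-u) * NN phi x1 \<le> (1-u)" using x1(2) u mult_left_mono[of "NN phi x1" 1 "1-u"] by auto
      moreover have "u * NN phi x2 < u \<or> (1-u) * NN phi x1 < (1-u)"
        using x1(2) x2(2) u by (cases "u = 0") auto
      ultimately show ?thesis by linarith
    qed
    finally have lt: "NN phi (u *\<^sub>R x2 + (1-u) *\<^sub>R x1) < 1" .
    have nn: "nonneg (u *\<^sub>R x2 + (1-u) *\<^sub>R x1)"
      using x1(1) x2(1) u by (intro nonneg_add nonneg_scale) auto
    have le: "\<forall>i. ((1 - u) *\<^sub>R y1 + u *\<^sub>R y2)$i \<le> (u *\<^sub>R x2 + (1-u) *\<^sub>R x1)$i"
    proof
      fix i
      have "(1-u) * y1$i \<le> (1-u) * x1$i" using x1(3) u by (intro mult_left_mono) auto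
      moreover have "u * y2$i \<le> u * x2$i" using x2(3) u by (intro mult_left_mono) auto
      ultimately show "((1 - u) *\<^sub>R y1 + u *\<^sub>R y2)$i \<le> (u *\<^sub>R x2 + (1-u) *\<^sub>R x1)$i" by simp
    qed
    show "(1 - u) *\<^sub>R y1 + u *\<^sub>R y2 \<in> S"
      unfolding S_def using nn lt le by blast
  qed
  have x0S: "x0 \<notin> S"
  proof
    assume "x0 \<in> S"
    then obtain x where x: "nonneg x" "NN phi x < 1" "\<forall>i. x0$i \<le> x$i" using S_def by auto
    have "NN phi x0 \<le> NN phi x" using NN_mono[OF psi nx0] x(3) by blast
    then show False using x(2) NNx0 by simp
  qed
  have memS: "y \<in> S" if "nonneg x" "NN phi x < 1" "\<And>i. y$i \<le> x$i" for x y
    unfolding S_def using that by blast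
  have nn0: "nonneg (0::real^'n)" by (simp add: nonneg_def)
  have S0: "0 \<in> S" using memS[OF nn0] by (simp add: NN_zero)
  have Sne: "S \<noteq> {}" using S0 by blast
  have "\<exists>a b. a \<noteq> 0 \<and> a \<bullet> x0 \<le> b \<and> (\<forall>x\<in>S. a \<bullet> x \<ge> b)"
  proof (rule separating_hyperplane_set_point_inaff[OF convS Sne x0S])
    fix a b assume "a \<noteq> 0" "a \<bullet> x0 \<le> b" "\<And>x. x \<in> S \<Longrightarrow> a \<bullet> x \<ge> b"
    then show "\<exists>a b. a \<noteq> 0 \<and> a \<bullet> x0 \<le> b \<and> (\<forall>x\<in>S. a \<bullet> x \<ge> b)" by blast
  qed
  then obtain a b where a0: "a \<noteq> 0" and ab: "a \<bullet> x0 \<le> b" and aS: "\<And>x. x \<in> S \<Longrightarrow> a \<bullet> x \<ge> b"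
    by blast
  define c where "c = - a"
  have cS: "c \<bullet> y \<le> c \<bullet> x0" if "y \<in> S" for y
    using aS[OF that] ab by (simp add: c_def)
  have cnn: "c$i \<ge> 0" for i
  proof (rule ccontr)
    assume "\<not> c$i \<ge> 0"
    then have ci: "c$i < 0" by simp
    define k where "k = (\<bar>c \<bullet> x0\<bar> + 1) / (- c$i)"
    have nci: "- c$i > 0" using ci by simp
    have kp: "k \<ge> 0" unfolding k_def by (rule divide_nonneg_pos[OF _ nci]) simp
    have "(- k) *\<^sub>R axis i 1 \<in> S"
    proof (rule memS[OF nn0])
      show "NN phi 0 < 1" by (simp add: NN_zero)
      fix i' show "((- k) *\<^sub>R axis i 1)$i' \<le> (0::real^'n)$i'" using kp by (simp add: axis_def)
    qed
    then have "c \<bullet> ((- k) *\<^sub>R axis i 1) \<le> c \<bullet> x0" by (rule cS)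
    moreover have "c \<bullet> ((- k) *\<^sub>R axis i 1) = \<bar>c \<bullet> x0\<bar> + 1"
      using ci by (simp add: inner_axis k_def)
    ultimately show False by linarith
  qed
  have "c \<noteq> 0" using a0 by (simp add: c_def)
  then obtain j where cj: "c$j \<noteq> 0" by (auto simp: vec_eq_iff)
  then have cjp: "c$j > 0" using cnn[of j] by simp
  have cpos: "c \<bullet> x0 > 0"
  proof -
    have "(1/2) *\<^sub>R axis j 1 \<in> S"
    proof (rule memS)
      show "nonneg ((1/2) *\<^sub>R axis j (1::real))" by (simp add: nonneg_def axis_def)
      show "NN phi ((1/2) *\<^sub>R axis j 1) < 1" using NN_axis[OF psi, of "1/2" j] by simp
    qed simp
    then have "c \<bullet> ((1/2) *\<^sub>R axis j 1) \<le> c \<bullet> x0" by (rule cS)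
    then show ?thesis using cjp by (simp add: inner_axis)
  qed
  have main: "c \<bullet> ((1 / phi t) *\<^sub>R t) \<le> c \<bullet> x0" if t: "t \<in> Omega" for t
  proof (rule ccontr)
    define v where "v = (1 / phi t) *\<^sub>R t"
    assume "\<not> c \<bullet> ((1 / phi t) *\<^sub>R t) \<le> c \<bullet> x0"
    then have gt: "c \<bullet> v > c \<bullet> x0" by (simp add: v_def)
    have pt: "phi t > 0" using psi_pos[OF psi t] .
    have NNv: "NN phi v = 1" using pt by (simp add: v_def NN_scale NN_Omega[OF t])
    have nv: "nonneg v" using t pt by (auto simp: v_def Omega_def nonneg_def)
    define l where "l = (c \<bullet> x0 + c \<bullet> v) / (2 * (c \<bullet> v))"
    have cvp: "0 < 2 * (c \<bullet> v)" using gt cpos by simp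
    have l0: "0 \<le> l" unfolding l_def using gt cpos by (intro divide_nonneg_pos) simp_all
    have l1: "l < 1" unfolding l_def using cvp gt by (simp add: divide_less_eq)
    have NNl: "NN phi (l *\<^sub>R v) = l" using NN_scale[OF l0, of phi v] NNv by simp
    have "l *\<^sub>R v \<in> S"
      by (rule memS[OF nonneg_scale[OF l0 nv]]) (simp_all add: NNl l1)
    then have "c \<bullet> (l *\<^sub>R v) \<le> c \<bullet> x0" by (rule cS)
    moreover have "c \<bullet> (l *\<^sub>R v) = (c \<bullet> x0 + c \<bullet> v) / 2"
      using gt cpos by (simp add: l_def)
    ultimately show False using gt by simp
  qed
  define sc where "sc = (\<Sum>i\<in>UNIV. c$i)"
  have scp: "sc > 0"
  proof -
    have "c$j \<le> sc" unfolding sc_def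
      using member_le_sum[of j UNIV "\<lambda>i. c$i"] cnn by auto
    then show ?thesis using cjp by simp
  qed
  define s where "s = (1 / sc) *\<^sub>R c"
  have sO: "s \<in> Omega"
    using scp cnn by (simp add: Omega_def s_def sum_divide_distrib[symmetric] sc_def[symmetric])
  have "t \<bullet> s / phi t \<le> t0 \<bullet> s / phi t0" if t: "t \<in> Omega" for t
  proof -
    have "c \<bullet> ((1 / phi t) *\<^sub>R t) \<le> c \<bullet> x0" using main[OF t] .
    then have "(t \<bullet> c) / phi t \<le> (t0 \<bullet> c) / phi t0"
      by (simp add: x0_def inner_commute)
    then have "(t \<bullet> c) / phi t / sc \<le> (t0 \<bullet> c) / phi t0 / sc"
      using scp by (intro divide_right_mono) auto
    then show ?thesis by (simp add: s_def mult.commute)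
  qed
  then show ?thesis using sO by blast
qed



lemma NN_cmp:
  fixes f g :: "real^'n \<Rightarrow> real"
  assumes ab: "a \<ge> 0" "b \<ge> 0" and fg: "\<And>t. t \<in> Omega \<Longrightarrow> a * f t \<le> b * g t"
    and y: "nonneg y"
  shows "a * NN f y \<le> b * NN g y"
proof (cases "(\<Sum>i\<in>UNIV. y$i) = 0")
  case True then show ?thesis by (simp add: NN_def)
next
  case False
  define S where "S = (\<Sum>i\<in>UNIV. y$i)"
  have Sp: "S > 0" and tO: "(\<chi> i. y$i / S) \<in> Omega"
    using nonneg_normalize[OF y False] by (auto simp: S_def)
  have "S * (a * f (\<chi> i. y$i / S)) \<le> S * (b * g (\<chi> i. y$i / S))"
    using fg[OF tO] Sp by (intro mult_left_mono) auto
  then show ?thesis using False unfolding NN_def Let_def S_def[symmetric]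
    by (simp add: algebra_simps)
qed

lemma psi_norm_scale:
  fixes x :: "'n::finite \<Rightarrow> 'a::real_normed_vector"
  assumes "c \<ge> 0"
  shows "psi_norm psi (\<lambda>i. c *\<^sub>R x i) = c * psi_norm psi x"
proof -
  have "(\<chi> i. norm (c *\<^sub>R x i)) = c *\<^sub>R (\<chi> i. norm (x i))"
    using assms by (simp add: vec_eq_iff)
  then show ?thesis by (simp add: psi_norm_NN NN_scale[OF assms])
qed

lemma nonneg_norms: "nonneg (\<chi> i. norm (x i))"
  by (simp add: nonneg_def)

lemma dualnorm_cmp:
  fixes psi phi :: "real^'n \<Rightarrow> real" and f :: "'n \<Rightarrow> 'a::real_normed_vector \<Rightarrow> real"
  assumes psi: "psi \<in> PsiClass" and c: "c > 0"
    and cmp: "\<And>x :: 'n \<Rightarrow> 'a. psi_norm psi x \<le> c * psi_norm phi x"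
    and f: "\<And>i. bounded_linear (f i)"
  shows "psi_dual_norm phi f \<le> c * psi_dual_norm psi f"
proof -
  define F where "F = (\<lambda>x::'n \<Rightarrow> 'a. \<bar>\<Sum>i\<in>UNIV. f i (x i)\<bar>)"
  have "\<forall>i. \<exists>K. K \<ge> 0 \<and> (\<forall>v. norm (f i v) \<le> norm v * K)"
    using f bounded_linear.nonneg_bounded by blast
  then obtain K where K: "\<And>i. K i \<ge> 0" "\<And>i v. norm (f i v) \<le> norm v * K i"
    by metis
  have bdd: "bdd_above (F ` {x. psi_norm psi x \<le> 1})"
  proof (rule bdd_aboveI)
    fix r assume "r \<in> F ` {x. psi_norm psi x \<le> 1}"
    then obtain x where x: "psi_norm psi x \<le> 1" and r: "r = F x" by auto
    have "F x \<le> (\<Sum>i\<in>UNIV. \<bar>f i (x i)\<bar>)" unfolding F_def by (rule sum_abs)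
    also have "\<dots> \<le> (\<Sum>i\<in>UNIV. K i)"
    proof (rule sum_mono)
      fix i
      have "norm (x i) \<le> 1"
        using NN_ge_comp[OF psi nonneg_norms, of x i] x by (simp add: psi_norm_NN)
      then have "norm (x i) * K i \<le> 1 * K i" using K(1) by (intro mult_right_mono) auto
      then show "\<bar>f i (x i)\<bar> \<le> K i" using K(2)[of i "x i"] by simp
    qed
    finally show "r \<le> (\<Sum>i\<in>UNIV. K i)" using r by simp
  qed
  have ne: "{x::'n \<Rightarrow> 'a. psi_norm phi x \<le> 1} \<noteq> {}"
  proof -
    have "psi_norm phi (\<lambda>i::'n. 0::'a) = 0" by (simp add: psi_norm_def)
    then have "(\<lambda>i::'n. 0::'a) \<in> {x::'n \<Rightarrow> 'a. psi_norm phi x \<le> 1}" by simp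
    then show ?thesis by blast
  qed
  have "psi_dual_norm phi f = (SUP x\<in>{x. psi_norm phi x \<le> 1}. F x)"
    by (simp add: psi_dual_norm_def F_def)
  also have "\<dots> \<le> c * psi_dual_norm psi f"
  proof (rule cSUP_least[OF ne])
    fix x :: "'n \<Rightarrow> 'a" assume "x \<in> {x. psi_norm phi x \<le> 1}"
    then have x: "psi_norm phi x \<le> 1" by simp
    define z where "z = (\<lambda>i. (1/c) *\<^sub>R x i)"
    have "psi_norm psi z = (1/c) * psi_norm psi x" using c by (simp add: z_def psi_norm_scale)
    also have "\<dots> \<le> (1/c) * (c * psi_norm phi x)" using cmp[of x] c by (intro mult_left_mono) auto
    also have "\<dots> \<le> 1" using c x by simp
    finally have zA: "z \<in> {x. psi_norm psi x \<le> 1}" by simp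
    have "F z \<le> psi_dual_norm psi f"
      unfolding psi_dual_norm_def F_def[symmetric] by (rule cSUP_upper[OF zA bdd])
    moreover have "F x = c * F z"
    proof -
      have "(\<Sum>i\<in>UNIV. f i (z i)) = (1/c) * (\<Sum>i\<in>UNIV. f i (x i))"
        by (simp add: z_def linear_cmul[OF bounded_linear.linear[OF f]] sum_distrib_left)
      then show ?thesis using c by (simp add: F_def abs_mult)
    qed
    ultimately show "F x \<le> c * psi_dual_norm psi f" using c by simp
  qed
  finally show ?thesis .
qed

lemma dual_cmp:
  fixes psi phi :: "real^'n \<Rightarrow> real" and s :: "real^'n"
  assumes psi: "psi \<in> PsiClass" and phi: "phi \<in> PsiClass" and k: "k > 0"
    and cmp: "\<And>t. t \<in> Omega \<Longrightarrow> k * phi t \<le> psi t" and s: "s \<in> Omega"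
  shows "k * dual_fun psi s \<le> dual_fun phi s"
proof -
  have "dual_fun psi s \<le> dual_fun phi s / k"
  proof (rule dual_least[OF psi s])
    fix t :: "real^'n" assume t: "t \<in> Omega"
    have pp: "0 < phi t" using psi_pos[OF phi t] .
    have "t \<bullet> s / psi t \<le> t \<bullet> s / (k * phi t)"
    proof (rule divide_left_mono)
      show "0 \<le> t \<bullet> s" using inner_nonneg_Om[OF psi s t] .
      show "k * phi t \<le> psi t" using cmp[OF t] .
      show "0 < psi t * (k * phi t)" using psi_pos[OF psi t] pp k by simp
    qed
    also have "\<dots> = (t \<bullet> s / phi t) / k" by simp
    also have "\<dots> \<le> dual_fun phi s / k"
      using dual_upper[OF phi s t] k by (intro divide_right_mono) auto
    finally show "t \<bullet> s / psi t \<le> dual_fun phi s / k" .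
  qed
  then show ?thesis using k by (simp add: field_simps)
qed

lemma dual_attained:
  fixes psi :: "real^'n \<Rightarrow> real"
  assumes psi: "psi \<in> PsiClass" and s: "s \<in> Omega" and t0: "t0 \<in> Omega"
    and h: "\<forall>t\<in>Omega. t \<bullet> s / psi t \<le> t0 \<bullet> s / psi t0"
  shows "dual_fun psi s = t0 \<bullet> s / psi t0"
  using dual_least[OF psi s, of "t0 \<bullet> s / psi t0"] h dual_upper[OF psi s t0] by auto

lemma ratio_bounds:
  fixes a b N :: real
  assumes N: "N > 0" and a: "1/N \<le> a" "a \<le> 1" and b: "1/N \<le> b" "b \<le> 1"
  shows "1/N \<le> a / b" "a / b \<le> N"
proof -
  have "0 < 1/N" using N by simp
  then have ap: "a > 0" and bp: "b > 0" using a b by linarith+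
  have "a \<le> a / b" using ap bp b by (simp add: le_divide_eq mult_left_le)
  then show "1/N \<le> a / b" using a by linarith
  have "a / b \<le> 1 / b" using ap bp a by (simp add: divide_right_mono)
  also have "\<dots> \<le> 1 / (1/N)" using bp b N by (intro divide_left_mono) auto
  finally show "a / b \<le> N" by simp
qed



lemma frac1: fixes a b m :: real assumes "b > 0" "m > 0" "m * a \<le> b" shows "a / b \<le> 1 / m"
  using assms by (simp add: field_simps)

lemma frac2: fixes a b m :: real assumes "b > 0" "m > 0" "b \<le> m * a" shows "1 / m \<le> a / b"
  using assms by (simp add: field_simps)

theorem proposition3p5:
  fixes psi phi :: "real^'n \<Rightarrow> real"
  assumes n2: "CARD('n) \<ge> 2"
    and psi: "psi \<in> PsiClass" and phi: "phi \<in> PsiClass"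
  defines "m \<equiv> (INF t\<in>Omega. psi t / phi t)"
    and "M \<equiv> (SUP t\<in>Omega. psi t / phi t)"
    and "ms \<equiv> (INF s\<in>Omega. dual_fun psi s / dual_fun phi s)"
    and "Ms \<equiv> (SUP s\<in>Omega. dual_fun psi s / dual_fun phi s)"
  shows "(\<forall>t\<in>Omega. 1 / real CARD('n) \<le> m \<and> m \<le> psi t / phi t
            \<and> psi t / phi t \<le> M \<and> M \<le> real CARD('n))
    \<and> (\<forall>t\<in>Omega. 1 / real CARD('n) \<le> ms \<and> ms \<le> dual_fun psi t / dual_fun phi t
            \<and> dual_fun psi t / dual_fun phi t \<le> Ms \<and> Ms \<le> real CARD('n))
    \<and> (m * Ms = 1 \<and> M * ms = 1)
    \<and> (\<forall>x :: 'n \<Rightarrow> 'a::real_normed_vector.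
          m * psi_norm phi x \<le> psi_norm psi x \<and> psi_norm psi x \<le> M * psi_norm phi x)
    \<and> (\<forall>f :: 'n \<Rightarrow> 'a \<Rightarrow> real. (\<forall>i. bounded_linear (f i)) \<longrightarrow>
          (1 / M) * psi_dual_norm phi f \<le> psi_dual_norm psi f
          \<and> psi_dual_norm psi f \<le> (1 / m) * psi_dual_norm phi f)
    \<and> ((\<forall>t\<in>Omega. psi t \<ge> phi t) \<longleftrightarrow> (\<forall>s\<in>Omega. dual_fun psi s \<le> dual_fun phi s))
    \<and> ((\<forall>t\<in>Omega. psi t \<le> phi t) \<longleftrightarrow> (\<forall>s\<in>Omega. dual_fun psi s \<ge> dual_fun phi s))"
proof -
  define N where "N = real CARD('n)"
  have Npos: "N > 0" by (simp add: N_def)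
  have psib: "\<And>t. t \<in> Omega \<Longrightarrow> 1/N \<le> psi t \<and> psi t \<le> 1"
    using psi_ge_n[OF psi] psi_upper[OF psi] by (simp add: N_def)
  have phib: "\<And>t. t \<in> Omega \<Longrightarrow> 1/N \<le> phi t \<and> phi t \<le> 1"
    using psi_ge_n[OF phi] psi_upper[OF phi] by (simp add: N_def)
  have dpsib: "\<And>s. s \<in> Omega \<Longrightarrow> 1/N \<le> dual_fun psi s \<and> dual_fun psi s \<le> 1"
    using dual_ge_n[OF psi] dual_le1[OF psi] by (simp add: N_def)
  have dphib: "\<And>s. s \<in> Omega \<Longrightarrow> 1/N \<le> dual_fun phi s \<and> dual_fun phi s \<le> 1"
    using dual_ge_n[OF phi] dual_le1[OF phi] by (simp add: N_def)
  have Rb: "\<And>t. t \<in> Omega \<Longrightarrow> 1/N \<le> psi t / phi t \<and> psi t / phi t \<le> N"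
    using ratio_bounds[OF Npos] psib phib by blast
  have Rdb: "\<And>s. s \<in> Omega \<Longrightarrow> 1/N \<le> dual_fun psi s / dual_fun phi s \<and> dual_fun psi s / dual_fun phi s \<le> N"
    using ratio_bounds[OF Npos] dpsib dphib by blast
  have bR1: "bdd_below ((\<lambda>t. psi t / phi t) ` Omega)"
    by (rule bdd_belowI2[where m="1/N"]) (use Rb in blast)
  have bR2: "bdd_above ((\<lambda>t. psi t / phi t) ` Omega)"
    by (rule bdd_aboveI2[where M="N"]) (use Rb in blast)
  have bD1: "bdd_below ((\<lambda>s. dual_fun psi s / dual_fun phi s) ` Omega)"
    by (rule bdd_belowI2[where m="1/N"]) (use Rdb in blast)
  have bD2: "bdd_above ((\<lambda>s. dual_fun psi s / dual_fun phi s) ` Omega)"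
    by (rule bdd_aboveI2[where M="N"]) (use Rdb in blast)
  have mle: "\<And>t. t \<in> Omega \<Longrightarrow> m \<le> psi t / phi t"
    unfolding m_def by (rule cINF_lower[OF bR1])
  have Mge: "\<And>t. t \<in> Omega \<Longrightarrow> psi t / phi t \<le> M"
    unfolding M_def by (rule cSUP_upper[OF _ bR2])
  have msle: "\<And>s. s \<in> Omega \<Longrightarrow> ms \<le> dual_fun psi s / dual_fun phi s"
    unfolding ms_def by (rule cINF_lower[OF bD1])
  have Msge: "\<And>s. s \<in> Omega \<Longrightarrow> dual_fun psi s / dual_fun phi s \<le> Ms"
    unfolding Ms_def by (rule cSUP_upper[OF _ bD2])
  have mN: "1/N \<le> m" unfolding m_def by (rule cINF_greatest[OF Omega_ne]) (use Rb in blast)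
  have MN: "M \<le> N" unfolding M_def by (rule cSUP_least[OF Omega_ne]) (use Rb in blast)
  have msN: "1/N \<le> ms" unfolding ms_def by (rule cINF_greatest[OF Omega_ne]) (use Rdb in blast)
  have MsN: "Ms \<le> N" unfolding Ms_def by (rule cSUP_least[OF Omega_ne]) (use Rdb in blast)
  have part1: "\<forall>t\<in>Omega. 1 / real CARD('n) \<le> m \<and> m \<le> psi t / phi t
            \<and> psi t / phi t \<le> M \<and> M \<le> real CARD('n)"
    using mN MN mle Mge by (simp add: N_def)
  have part2: "\<forall>t\<in>Omega. 1 / real CARD('n) \<le> ms \<and> ms \<le> dual_fun psi t / dual_fun phi t
            \<and> dual_fun psi t / dual_fun phi t \<le> Ms \<and> Ms \<le> real CARD('n)"
    using msN MsN msle Msge by (simp add: N_def)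
  have "0 < 1/N" using Npos by simp
  then have mpos: "m > 0" using mN by linarith
  have ppos: "\<And>t. t \<in> Omega \<Longrightarrow> 0 < phi t" using psi_pos[OF phi] .
  have qpos: "\<And>t. t \<in> Omega \<Longrightarrow> 0 < psi t" using psi_pos[OF psi] .
  have dppos: "\<And>s. s \<in> Omega \<Longrightarrow> 0 < dual_fun phi s" using dual_pos[OF phi] .
  have dqpos: "\<And>s. s \<in> Omega \<Longrightarrow> 0 < dual_fun psi s" using dual_pos[OF psi] .
  have cmp1: "\<And>t. t \<in> Omega \<Longrightarrow> m * phi t \<le> psi t"
    using mle ppos by (simp add: le_divide_eq)
  have cmp1': "\<And>t. t \<in> Omega \<Longrightarrow> psi t \<le> M * phi t"
    using Mge ppos by (simp add: divide_le_eq)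
  have cont: "continuous_on Omega (\<lambda>t. psi t / phi t)"
    using ppos by (intro continuous_on_divide PsiD(2)[OF psi] PsiD(2)[OF phi]) (metis less_irrefl)
  obtain t0 where t0: "t0 \<in> Omega" and t0min: "\<forall>y\<in>Omega. psi t0 / phi t0 \<le> psi y / phi y"
    using continuous_attains_inf[OF Omega_compact Omega_ne cont] by blast
  obtain t1 where t1: "t1 \<in> Omega" and t1max: "\<forall>y\<in>Omega. psi y / phi y \<le> psi t1 / phi t1"
    using continuous_attains_sup[OF Omega_compact Omega_ne cont] by blast
  have Mpos: "M > 0" using mle[OF t0] Mge[OF t0] mpos by linarith
  have cmp2: "\<And>t. t \<in> Omega \<Longrightarrow> (1/M) * psi t \<le> phi t"
    using cmp1' Mpos by (simp add: field_simps)
  have m_eq: "m = psi t0 / phi t0"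
  proof (rule antisym)
    show "m \<le> psi t0 / phi t0" using mle[OF t0] .
    show "psi t0 / phi t0 \<le> m" unfolding m_def
      by (rule cINF_greatest[OF Omega_ne]) (use t0min in blast)
  qed
  have M_eq: "M = psi t1 / phi t1"
  proof (rule antisym)
    show "psi t1 / phi t1 \<le> M" using Mge[OF t1] .
    show "M \<le> psi t1 / phi t1" unfolding M_def
      by (rule cSUP_least[OF Omega_ne]) (use t1max in blast)
  qed
  have psit0: "psi t0 = m * phi t0" using m_eq ppos[OF t0] by simp
  have psit1: "psi t1 = M * phi t1" using M_eq ppos[OF t1] by simp
  have dc1: "\<And>s. s \<in> Omega \<Longrightarrow> m * dual_fun psi s \<le> dual_fun phi s"
    by (rule dual_cmp[OF psi phi mpos cmp1])
  have dc2: "\<And>s. s \<in> Omega \<Longrightarrow> (1/M) * dual_fun phi s \<le> dual_fun psi s"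
    using Mpos by (intro dual_cmp[OF phi psi _ cmp2]) auto
  have Ms_eq: "Ms = 1/m"
  proof (rule antisym)
    show "Ms \<le> 1/m" unfolding Ms_def
    proof (rule cSUP_least[OF Omega_ne])
      fix s :: "real^'n" assume s: "s \<in> Omega"
      show "dual_fun psi s / dual_fun phi s \<le> 1/m"
        using frac1[OF dppos[OF s] mpos dc1[OF s]] .
    qed
    obtain s0 where s0: "s0 \<in> Omega" and h: "\<forall>t\<in>Omega. t \<bullet> s0 / phi t \<le> t0 \<bullet> s0 / phi t0"
      using key_support[OF phi t0] by blast
    have e1: "dual_fun phi s0 = t0 \<bullet> s0 / phi t0" by (rule dual_attained[OF phi s0 t0 h])
    have e2: "t0 \<bullet> s0 / psi t0 \<le> dual_fun psi s0" by (rule dual_upper[OF psi s0 t0])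
    have "m * (t0 \<bullet> s0 / psi t0) = t0 \<bullet> s0 / phi t0"
      using psit0 mpos ppos[OF t0] by simp
    then have "dual_fun phi s0 \<le> m * dual_fun psi s0"
      using e1 e2 mpos by (metis mult_left_mono less_imp_le)
    then have "1/m \<le> dual_fun psi s0 / dual_fun phi s0"
      by (rule frac2[OF dppos[OF s0] mpos])
    also have "\<dots> \<le> Ms" by (rule Msge[OF s0])
    finally show "1/m \<le> Ms" .
  qed
  have ms_eq: "ms = 1/M"
  proof (rule antisym)
    show "1/M \<le> ms" unfolding ms_def
    proof (rule cINF_greatest[OF Omega_ne])
      fix s :: "real^'n" assume s: "s \<in> Omega"
      have "dual_fun phi s \<le> M * dual_fun psi s"
        using dc2[OF s] Mpos by (simp add: field_simps)
      then show "1/M \<le> dual_fun psi s / dual_fun phi s"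
        by (rule frac2[OF dppos[OF s] Mpos])
    qed
    obtain s1 where s1: "s1 \<in> Omega" and h: "\<forall>t\<in>Omega. t \<bullet> s1 / psi t \<le> t1 \<bullet> s1 / psi t1"
      using key_support[OF psi t1] by blast
    have e1: "dual_fun psi s1 = t1 \<bullet> s1 / psi t1" by (rule dual_attained[OF psi s1 t1 h])
    have e2: "t1 \<bullet> s1 / phi t1 \<le> dual_fun phi s1" by (rule dual_upper[OF phi s1 t1])
    have "M * (t1 \<bullet> s1 / psi t1) = t1 \<bullet> s1 / phi t1"
      using psit1 Mpos ppos[OF t1] by simp
    then have "M * dual_fun psi s1 \<le> dual_fun phi s1"
      using e1 e2 by simp
    then have "dual_fun psi s1 / dual_fun phi s1 \<le> 1/M"
      by (rule frac1[OF dppos[OF s1] Mpos])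
    then show "ms \<le> 1/M" using msle[OF s1] by linarith
  qed
  have part3: "m * Ms = 1 \<and> M * ms = 1"
    using Ms_eq ms_eq mpos Mpos by simp
  have nm1: "\<And>x :: 'n \<Rightarrow> 'a. m * psi_norm phi x \<le> psi_norm psi x"
    unfolding psi_norm_NN using NN_cmp[of m 1 phi psi, OF _ _ _ nonneg_norms] mpos cmp1 by simp
  have nm2: "\<And>x :: 'n \<Rightarrow> 'a. psi_norm psi x \<le> M * psi_norm phi x"
    unfolding psi_norm_NN using NN_cmp[of 1 M psi phi, OF _ _ _ nonneg_norms] Mpos cmp1' by simp
  have part4: "\<forall>x :: 'n \<Rightarrow> 'a. m * psi_norm phi x \<le> psi_norm psi x \<and> psi_norm psi x \<le> M * psi_norm phi x"
    using nm1 nm2 by blast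
  have part5: "\<forall>f :: 'n \<Rightarrow> 'a \<Rightarrow> real. (\<forall>i. bounded_linear (f i)) \<longrightarrow>
          (1 / M) * psi_dual_norm phi f \<le> psi_dual_norm psi f
          \<and> psi_dual_norm psi f \<le> (1 / m) * psi_dual_norm phi f"
  proof (intro allI impI conjI)
    fix f :: "'n \<Rightarrow> 'a \<Rightarrow> real" assume f: "\<forall>i. bounded_linear (f i)"
    have "psi_dual_norm phi f \<le> M * psi_dual_norm psi f"
      using dualnorm_cmp[OF psi Mpos nm2] f by blast
    then show "(1 / M) * psi_dual_norm phi f \<le> psi_dual_norm psi f"
      using Mpos by (simp add: field_simps)
    have nm3: "\<And>x :: 'n \<Rightarrow> 'a. psi_norm phi x \<le> (1/m) * psi_norm psi x"
      using nm1 mpos by (simp add: field_simps)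
    show "psi_dual_norm psi f \<le> (1 / m) * psi_dual_norm phi f"
      using dualnorm_cmp[OF phi _ nm3] f mpos by simp
  qed
  have part6: "(\<forall>t\<in>Omega. psi t \<ge> phi t) \<longleftrightarrow> (\<forall>s\<in>Omega. dual_fun psi s \<le> dual_fun phi s)"
  proof
    assume a: "\<forall>t\<in>Omega. psi t \<ge> phi t"
    show "\<forall>s\<in>Omega. dual_fun psi s \<le> dual_fun phi s"
      using dual_cmp[OF psi phi, of 1] a by simp
  next
    assume a: "\<forall>s\<in>Omega. dual_fun psi s \<le> dual_fun phi s"
    have "Ms \<le> 1" unfolding Ms_def
    proof (rule cSUP_least[OF Omega_ne])
      fix s :: "real^'n" assume s: "s \<in> Omega"
      show "dual_fun psi s / dual_fun phi s \<le> 1" using a s dppos[OF s] by (simp add: divide_le_eq)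
    qed
    then have "1 \<le> m" using Ms_eq mpos by (simp add: divide_le_eq)
    show "\<forall>t\<in>Omega. psi t \<ge> phi t"
    proof
      fix t :: "real^'n" assume t: "t \<in> Omega"
      have "1 * phi t \<le> m * phi t" using \<open>1 \<le> m\<close> ppos[OF t] by (intro mult_right_mono) auto
      then show "psi t \<ge> phi t" using cmp1[OF t] by linarith
    qed
  qed
  have part7: "(\<forall>t\<in>Omega. psi t \<le> phi t) \<longleftrightarrow> (\<forall>s\<in>Omega. dual_fun psi s \<ge> dual_fun phi s)"
  proof
    assume a: "\<forall>t\<in>Omega. psi t \<le> phi t"
    show "\<forall>s\<in>Omega. dual_fun psi s \<ge> dual_fun phi s"
      using dual_cmp[OF phi psi, of 1] a by simp
  next
    assume a: "\<forall>s\<in>Omega. dual_fun psi s \<ge> dual_fun phi s"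
    have "1 \<le> ms" unfolding ms_def
    proof (rule cINF_greatest[OF Omega_ne])
      fix s :: "real^'n" assume s: "s \<in> Omega"
      show "1 \<le> dual_fun psi s / dual_fun phi s" using a s dppos[OF s] by (simp add: le_divide_eq)
    qed
    then have "M \<le> 1" using ms_eq Mpos by (simp add: le_divide_eq)
    show "\<forall>t\<in>Omega. psi t \<le> phi t"
    proof
      fix t :: "real^'n" assume t: "t \<in> Omega"
      have "M * phi t \<le> 1 * phi t" using \<open>M \<le> 1\<close> ppos[OF t] by (intro mult_right_mono) auto
      then show "psi t \<le> phi t" using cmp1'[OF t] by linarith
    qed
  qed
  show ?thesis using part1 part2 part3 part4 part5 part6 part7 by blast
qed

end
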